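(* Let $V$ be a finite set of truth values containing distinct elements $1,0$, and let $\models$ be an intersective mixed consequence truth-relation with minimal representation $\models_{\mathcal{D}_p^1,\mathcal{D}_c^1}\cap\dots\cap\models_{\mathcal{D}_p^K,\mathcal{D}_c^K}$. Let $f:V^n\to V$ and let $\mathcal{B}^p,\mathcal{B}^c\subseteq\mathcal{P}(\{1,\dots,n\})\times\mathcal{P}(\{1,\dots,n\})$. Then $f$ satisfies the regularity rule $(\mathcal{B}^p,\mathcal{B}^c)$ at the level of truth values, i.e. for all $\gamma,\delta\subseteq V$ and $x_1,\dots,x_n\in V$: $\gamma\cup\{f(x_1,\dots,x_n)\}\models\delta$ iff for all $(B_p,B_c)\in\mathcal{B}^p$: $\gamma\cup\{x_i:i\in B_p\}\models\{x_i:i\in B_c\}\cup\delta$, and $\gamma\models\{f(x_1,\dots,x_n)\}\cup\delta$ iff for all $(B_p,B_c)\in\mathcal{B}^c$: $\gamma\cup\{x_i:i\in B_p\}\models\{x_i:i\in B_c\}\cup\delta$, if and only if for every $k\in\{1,\dots,K\}$ and all $x_1,\dots,x_n\in V$: $f(x_1,\dots,x_n)\notin\mathcal{D}_p^k$ iff for all $(B_p,B_c)\in\mathcal{B}^p$: ($\{x_i:i\in B_p\}\subseteq\mathcal{D}_p^k\Rightarrow\{x_i:i\in B_c\}\cap\mathcal{D}_c^k\neq\emptyset$); and $f(x_1,\dots,x_n)\in\mathcal{D}_c^k$ iff for all $(B_p,B_c)\in\mathcal{B}^c$: ($\{x_i:i\in B_p\}\subseteq\mathcal{D}_p^k\Rightarrow\{x_i:i\in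 B_c\}\cap\mathcal{D}_c^k\neq\emptyset$).
   Context: A set of designated values is a subset $\mathcal{D}\subseteq V$ with $1\in\mathcal{D}$, $0\notin\mathcal{D}$. For such $\mathcal{D}_p,\mathcal{D}_c$, the mixed consequence truth-relation is $\gamma\models_{\mathcal{D}_p,\mathcal{D}_c}\delta$ iff ($\gamma\subseteq\mathcal{D}_p\Rightarrow\delta\cap\mathcal{D}_c\neq\emptyset$), for $\gamma,\delta\subseteq V$. An intersective mixed consequence truth-relation is a finite intersection of mixed ones; a list of mixed relations whose intersection is it is a representation, and a minimal representation is one with the least possible number of members. Empty conjunctions count as true. *)

theory Defs
  imports "HOL-Library.FuncSet"
begin

definition designated :: "'v set \<Rightarrow> 'v \<Rightarrow> 'v \<Rightarrow> 'v set \<Rightarrow> bool" where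
  "designated V one zero D \<longleftrightarrow> D \<subseteq> V \<and> one \<in> D \<and> zero \<notin> D"

definition mixed_rel :: "'v set \<Rightarrow> 'v set \<Rightarrow> 'v set \<Rightarrow> 'v set \<Rightarrow> bool" where
  "mixed_rel Dp Dc \<gamma> \<delta> \<longleftrightarrow> (\<gamma> \<subseteq> Dp \<longrightarrow> \<delta> \<inter> Dc \<noteq> {})"

text \<open>A representation of R: a list of pairs (Dp, Dc) of designated sets whose
  mixed relations intersect to R (on subsets of V). The members are indexed
  0..K-1 here instead of 1..K.\<close>

definition is_representation ::
  "'v set \<Rightarrow> 'v \<Rightarrow> 'v \<Rightarrow> ('v set \<Rightarrow> 'v set \<Rightarrow> bool) \<Rightarrow> ('v set \<times> 'v set) list \<Rightarrow> bool" where
  "is_representation V one zero R reps \<longleftrightarrow>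
     (\<forall>k < length reps. designated V one zero (fst (reps ! k)) \<and> designated V one zero (snd (reps ! k))) \<and>
     (\<forall>\<gamma> \<delta>. \<gamma> \<subseteq> V \<longrightarrow> \<delta> \<subseteq> V \<longrightarrow>
        (R \<gamma> \<delta> \<longleftrightarrow> (\<forall>k < length reps. mixed_rel (fst (reps ! k)) (snd (reps ! k)) \<gamma> \<delta>)))"

definition intersective_mixed ::
  "'v set \<Rightarrow> 'v \<Rightarrow> 'v \<Rightarrow> ('v set \<Rightarrow> 'v set \<Rightarrow> bool) \<Rightarrow> bool" where
  "intersective_mixed V one zero R \<longleftrightarrow> (\<exists>reps. is_representation V one zero R reps)"

definition is_minimal_representation ::
  "'v set \<Rightarrow> 'v \<Rightarrow> 'v \<Rightarrow> ('v set \<Rightarrow> 'v set \<Rightarrow> bool) \<Rightarrow> ('v set \<times> 'v set) list \<Rightarrow> bool" where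
  "is_minimal_representation V one zero R reps \<longleftrightarrow>
     is_representation V one zero R reps \<and>
     (\<forall>reps'. is_representation V one zero R reps' \<longrightarrow> length reps \<le> length reps')"

end

theory Submission
  imports Defs
begin

lemma rep_set:
  "is_representation V one zero R reps \<longleftrightarrow>
     (\<forall>p\<in>set reps. designated V one zero (fst p) \<and> designated V one zero (snd p)) \<and>
     (\<forall>\<gamma> \<delta>. \<gamma> \<subseteq> V \<longrightarrow> \<delta> \<subseteq> V \<longrightarrow>
        (R \<gamma> \<delta> \<longleftrightarrow> (\<forall>p\<in>set reps. mixed_rel (fst p) (snd p) \<gamma> \<delta>)))"
  unfolding is_representation_def by (simp add: all_set_conv_all_nth)

lemma nonred:
  assumes min: "is_minimal_representation V one zero R reps"
    and k: "k < length reps" and j: "j < length reps"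
    and s1: "fst (reps ! k) \<subseteq> fst (reps ! j)" and s2: "snd (reps ! j) \<subseteq> snd (reps ! k)"
  shows "j = k"
proof (rule ccontr)
  assume jk: "j \<noteq> k"
  define reps' where "reps' = take k reps @ drop (Suc k) reps"
  have len: "length reps' < length reps" using k unfolding reps'_def by simp
  have decomp: "reps = take k reps @ reps ! k # drop (Suc k) reps"
    using k by (simp add: id_take_nth_drop)
  have sub: "set reps' \<subseteq> set reps" unfolding reps'_def
    using set_take_subset[of k reps] set_drop_subset[of "Suc k" reps] by auto
  have sup: "set reps \<subseteq> insert (reps ! k) (set reps')"
    by (subst decomp) (auto simp: reps'_def)
  have jin: "reps ! j \<in> set reps'"
  proof (cases "j < k")
    case True
    then have "reps' ! j = reps ! j" using k unfolding reps'_def by (simp add: nth_append)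
    moreover have "j < length reps'" using True k unfolding reps'_def by simp
    ultimately show ?thesis by (metis nth_mem)
  next
    case False
    then have jk': "j > k" using jk by simp
    then have "reps' ! (j - 1) = reps ! j" using k j unfolding reps'_def
      by (auto simp add: nth_append)
    moreover have "j - 1 < length reps'" using jk' j unfolding reps'_def by simp
    ultimately show ?thesis by (metis nth_mem)
  qed
  have imp: "mixed_rel (fst (reps ! j)) (snd (reps ! j)) g d \<Longrightarrow> mixed_rel (fst (reps ! k)) (snd (reps ! k)) g d" for g d
    using s1 s2 unfolding mixed_rel_def by blast
  have eq: "(\<forall>p\<in>set reps. mixed_rel (fst p) (snd p) g d) \<longleftrightarrow> (\<forall>p\<in>set reps'. mixed_rel (fst p) (snd p) g d)" for g d
    using sub sup jin imp by blast
  have "is_representation V one zero R reps" using min unfolding is_minimal_representation_def by simp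
  then have A: "\<forall>p\<in>set reps. designated V one zero (fst p) \<and> designated V one zero (snd p)"
    and B: "\<forall>\<gamma> \<delta>. \<gamma> \<subseteq> V \<longrightarrow> \<delta> \<subseteq> V \<longrightarrow>
        (R \<gamma> \<delta> \<longleftrightarrow> (\<forall>p\<in>set reps. mixed_rel (fst p) (snd p) \<gamma> \<delta>))"
    unfolding rep_set by (rule conjunct1, rule conjunct2)
  have "is_representation V one zero R reps'"
    unfolding rep_set
  proof (intro conjI allI impI)
    show "\<forall>p\<in>set reps'. designated V one zero (fst p) \<and> designated V one zero (snd p)"
      using A sub by blast
  next
    fix g d :: "'a set" assume "g \<subseteq> V" "d \<subseteq> V"
    then show "R g d \<longleftrightarrow> (\<forall>p\<in>set reps'. mixed_rel (fst p) (snd p) g d)"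
      using B eq[of g d] by simp
  qed
  then have "length reps \<le> length reps'" using min unfolding is_minimal_representation_def by simp
  with len show False by simp
qed

lemma ptw: "(g \<union> A \<subseteq> X \<longrightarrow> (B \<union> d) \<inter> Y \<noteq> {}) = (g \<subseteq> X \<and> d \<inter> Y = {} \<longrightarrow> A \<subseteq> X \<longrightarrow> B \<inter> Y \<noteq> {})"
  by (auto simp: Int_Un_distrib2)

lemma swap3: "(\<forall>k<(n::nat). A k \<longrightarrow> B k \<longrightarrow> C k \<longrightarrow> F k) = (\<forall>k<n. A k \<longrightarrow> C k \<longrightarrow> B k \<longrightarrow> F k)"
  by blast

lemma swapq: "(\<forall>k<(n::nat). C k \<longrightarrow> (\<forall>(a, b)\<in>S. Q k a b)) = (\<forall>(a, b)\<in>S. \<forall>k<n. C k \<longrightarrow> Q k a b)"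
  by blast

lemma ballcong2: "(\<And>a b. (a, b) \<in> S \<Longrightarrow> P a b = Q a b) \<Longrightarrow> (\<forall>(a, b)\<in>S. P a b) = (\<forall>(a, b)\<in>S. Q a b)"
  by auto

lemma allcong_imp: "(\<And>k. k < (n::nat) \<Longrightarrow> P k = Q k) \<Longrightarrow> (\<forall>k<n. C k \<longrightarrow> P k) = (\<forall>k<n. C k \<longrightarrow> Q k)"
  by auto

theorem theorem3p11:
  fixes V :: "'v set" and one zero :: 'v
    and R :: "'v set \<Rightarrow> 'v set \<Rightarrow> bool"
    and reps :: "('v set \<times> 'v set) list"
    and n :: nat and f :: "(nat \<Rightarrow> 'v) \<Rightarrow> 'v"
    and Bp Bc :: "(nat set \<times> nat set) set"
  assumes "finite V" and "one \<in> V" and "zero \<in> V" and "one \<noteq> zero"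
    and "intersective_mixed V one zero R"
    and "is_minimal_representation V one zero R reps"
    and "f \<in> ({1..n} \<rightarrow>\<^sub>E V) \<rightarrow> V"
    and "Bp \<subseteq> Pow {1..n} \<times> Pow {1..n}" and "Bc \<subseteq> Pow {1..n} \<times> Pow {1..n}"
  shows "(\<forall>\<gamma> \<delta> x. \<gamma> \<subseteq> V \<longrightarrow> \<delta> \<subseteq> V \<longrightarrow> x \<in> ({1..n} \<rightarrow>\<^sub>E V) \<longrightarrow>
            (R (\<gamma> \<union> {f x}) \<delta> \<longleftrightarrow>
               (\<forall>(bp, bc) \<in> Bp. R (\<gamma> \<union> x ` bp) (x ` bc \<union> \<delta>))) \<and>
            (R \<gamma> ({f x} \<union> \<delta>) \<longleftrightarrow>
               (\<forall>(bp, bc) \<in> Bc. R (\<gamma> \<union> x ` bp) (x ` bc \<union> \<delta>))))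
         \<longleftrightarrow>
         (\<forall>k < length reps. \<forall>x \<in> ({1..n} \<rightarrow>\<^sub>E V).
            (f x \<notin> fst (reps ! k) \<longleftrightarrow>
               (\<forall>(bp, bc) \<in> Bp. x ` bp \<subseteq> fst (reps ! k) \<longrightarrow> x ` bc \<inter> snd (reps ! k) \<noteq> {})) \<and>
            (f x \<in> snd (reps ! k) \<longleftrightarrow>
               (\<forall>(bp, bc) \<in> Bc. x ` bp \<subseteq> fst (reps ! k) \<longrightarrow> x ` bc \<inter> snd (reps ! k) \<noteq> {})))"
    (is "?L \<longleftrightarrow> ?Rt")
proof -
  define D where "D k = fst (reps ! k)" for k
  define E where "E k = snd (reps ! k)" for k
  let ?n = "length reps"
  have rep: "is_representation V one zero R reps"
    using assms(6) unfolding is_minimal_representation_def by simp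
  have DV: "D k \<subseteq> V" "E k \<subseteq> V" if "k < ?n" for k
    using rep that unfolding is_representation_def designated_def D_def E_def by auto
  have Riff: "R g d \<longleftrightarrow> (\<forall>k<?n. g \<subseteq> D k \<longrightarrow> d \<inter> E k \<noteq> {})" if "g \<subseteq> V" "d \<subseteq> V" for g d
    using rep that unfolding is_representation_def mixed_rel_def D_def E_def by auto
  have img: "x ` b \<subseteq> V" if "x \<in> {1..n} \<rightarrow>\<^sub>E V" "b \<subseteq> {1..n}" for x :: "nat \<Rightarrow> 'v" and b
    using that by auto
  have fV: "f x \<in> V" if "x \<in> {1..n} \<rightarrow>\<^sub>E V" for x using assms(7) that by auto
  have key: "R (D k \<union> A) (B \<union> (V - E k)) \<longleftrightarrow> (A \<subseteq> D k \<longrightarrow> B \<inter> E k \<noteq> {})"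
    if k: "k < ?n" and A: "A \<subseteq> V" and B: "B \<subseteq> V" for k A B
  proof -
    have other: "D k \<union> A \<subseteq> D j \<longrightarrow> (B \<union> (V - E k)) \<inter> E j \<noteq> {}" if j: "j < ?n" "j \<noteq> k" for j
    proof
      assume "D k \<union> A \<subseteq> D j"
      then have "D k \<subseteq> D j" by simp
      then have "\<not> E j \<subseteq> E k" using nonred[OF assms(6) k j(1)] j(2) unfolding D_def E_def by blast
      then obtain e where "e \<in> E j" "e \<notin> E k" by blast
      moreover have "e \<in> V" using DV(2)[OF j(1)] \<open>e \<in> E j\<close> by blast
      ultimately show "(B \<union> (V - E k)) \<inter> E j \<noteq> {}" by blast
    qed
    have self: "(D k \<union> A \<subseteq> D k \<longrightarrow> (B \<union> (V - E k)) \<inter> E k \<noteq> {}) \<longleftrightarrow> (A \<subseteq> D k \<longrightarrow> B \<inter> E k \<noteq> {})"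
      by blast
    have "R (D k \<union> A) (B \<union> (V - E k)) \<longleftrightarrow> (\<forall>j<?n. D k \<union> A \<subseteq> D j \<longrightarrow> (B \<union> (V - E k)) \<inter> E j \<noteq> {})"
    proof -
      have "D k \<union> A \<subseteq> V" "B \<union> (V - E k) \<subseteq> V" using DV[OF k] A B by auto
      then show ?thesis by (rule Riff)
    qed
    also have "\<dots> \<longleftrightarrow> (D k \<union> A \<subseteq> D k \<longrightarrow> (B \<union> (V - E k)) \<inter> E k \<noteq> {})"
    proof
      assume "\<forall>j<?n. D k \<union> A \<subseteq> D j \<longrightarrow> (B \<union> (V - E k)) \<inter> E j \<noteq> {}"
      then show "D k \<union> A \<subseteq> D k \<longrightarrow> (B \<union> (V - E k)) \<inter> E k \<noteq> {}" using k by blast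
    next
      assume h: "D k \<union> A \<subseteq> D k \<longrightarrow> (B \<union> (V - E k)) \<inter> E k \<noteq> {}"
      show "\<forall>j<?n. D k \<union> A \<subseteq> D j \<longrightarrow> (B \<union> (V - E k)) \<inter> E j \<noteq> {}"
      proof (intro allI impI)
        fix j assume "j < ?n" "D k \<union> A \<subseteq> D j"
        then show "(B \<union> (V - E k)) \<inter> E j \<noteq> {}"
          using other[of j] h by (cases "j = k") auto
      qed
    qed
    finally show ?thesis using self by simp
  qed
  show ?thesis
  proof
    assume L: ?L
    show ?Rt
    proof (intro allI impI ballI)
      fix k x assume k: "k < ?n" and x: "x \<in> {1..n} \<rightarrow>\<^sub>E V"
      have g: "D k \<subseteq> V" and d: "V - E k \<subseteq> V" using DV[OF k] by auto
      have L1: "R (D k \<union> {f x}) (V - E k) \<longleftrightarrow> (\<forall>(bp, bc) \<in> Bp. R (D k \<union> x ` bp) (x ` bc \<union> (V - E k)))"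
        and L2: "R (D k) ({f x} \<union> (V - E k)) \<longleftrightarrow> (\<forall>(bp, bc) \<in> Bc. R (D k \<union> x ` bp) (x ` bc \<union> (V - E k)))"
        using conjunct1[OF L[rule_format, OF g d x]] conjunct2[OF L[rule_format, OF g d x]] by auto
      have a1: "R (D k \<union> {f x}) (V - E k) \<longleftrightarrow> f x \<notin> D k"
        using key[OF k, of "{f x}" "{}"] fV[OF x] by simp
      have a2: "R (D k) ({f x} \<union> (V - E k)) \<longleftrightarrow> f x \<in> E k"
        using key[OF k, of "{}" "{f x}"] fV[OF x] by simp
      have b1: "(\<forall>(bp, bc) \<in> Bp. R (D k \<union> x ` bp) (x ` bc \<union> (V - E k))) \<longleftrightarrow>
          (\<forall>(bp, bc) \<in> Bp. x ` bp \<subseteq> D k \<longrightarrow> x ` bc \<inter> E k \<noteq> {})"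
      proof -
        have "R (D k \<union> x ` bp) (x ` bc \<union> (V - E k)) \<longleftrightarrow> (x ` bp \<subseteq> D k \<longrightarrow> x ` bc \<inter> E k \<noteq> {})"
          if "(bp, bc) \<in> Bp" for bp bc
        proof -
          have "bp \<subseteq> {1..n}" "bc \<subseteq> {1..n}" using that assms(8) by auto
          then show ?thesis using key[OF k img[OF x] img[OF x]] by simp
        qed
        then show ?thesis by auto
      qed
      have b2: "(\<forall>(bp, bc) \<in> Bc. R (D k \<union> x ` bp) (x ` bc \<union> (V - E k))) \<longleftrightarrow>
          (\<forall>(bp, bc) \<in> Bc. x ` bp \<subseteq> D k \<longrightarrow> x ` bc \<inter> E k \<noteq> {})"
      proof -
        have "R (D k \<union> x ` bp) (x ` bc \<union> (V - E k)) \<longleftrightarrow> (x ` bp \<subseteq> D k \<longrightarrow> x ` bc \<inter> E k \<noteq> {})"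
          if "(bp, bc) \<in> Bc" for bp bc
        proof -
          have "bp \<subseteq> {1..n}" "bc \<subseteq> {1..n}" using that assms(9) by auto
          then show ?thesis using key[OF k img[OF x] img[OF x]] by simp
        qed
        then show ?thesis by auto
      qed
      show "(f x \<notin> fst (reps ! k) \<longleftrightarrow>
               (\<forall>(bp, bc) \<in> Bp. x ` bp \<subseteq> fst (reps ! k) \<longrightarrow> x ` bc \<inter> snd (reps ! k) \<noteq> {})) \<and>
            (f x \<in> snd (reps ! k) \<longleftrightarrow>
               (\<forall>(bp, bc) \<in> Bc. x ` bp \<subseteq> fst (reps ! k) \<longrightarrow> x ` bc \<inter> snd (reps ! k) \<noteq> {}))"
      proof -
        have "(f x \<notin> D k \<longleftrightarrow> (\<forall>(bp, bc) \<in> Bp. x ` bp \<subseteq> D k \<longrightarrow> x ` bc \<inter> E k \<noteq> {})) \<and>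
              (f x \<in> E k \<longleftrightarrow> (\<forall>(bp, bc) \<in> Bc. x ` bp \<subseteq> D k \<longrightarrow> x ` bc \<inter> E k \<noteq> {}))"
          using L1 L2 a1 a2 b1 b2 by simp
        then show ?thesis unfolding D_def E_def .
      qed
    qed
  next
    assume Rt: ?Rt
    show ?L
    proof (intro allI impI conjI)
      fix g d x assume g: "g \<subseteq> V" and d: "d \<subseteq> V" and x: "x \<in> {1..n} \<rightarrow>\<^sub>E V"
      have P: "f x \<notin> D k \<longleftrightarrow> (\<forall>(bp, bc) \<in> Bp. x ` bp \<subseteq> D k \<longrightarrow> x ` bc \<inter> E k \<noteq> {})"
        if "k < ?n" for k using conjunct1[OF Rt[rule_format, OF that x]] unfolding D_def E_def .
      have C: "f x \<in> E k \<longleftrightarrow> (\<forall>(bp, bc) \<in> Bc. x ` bp \<subseteq> D k \<longrightarrow> x ` bc \<inter> E k \<noteq> {})"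
        if "k < ?n" for k using conjunct2[OF Rt[rule_format, OF that x]] unfolding D_def E_def .
      have r1: "R (g \<union> {f x}) d \<longleftrightarrow> (\<forall>k<?n. g \<subseteq> D k \<and> d \<inter> E k = {} \<longrightarrow> f x \<notin> D k)"
        using Riff[of "g \<union> {f x}" d] g d fV[OF x] by auto
      have r2: "R g ({f x} \<union> d) \<longleftrightarrow> (\<forall>k<?n. g \<subseteq> D k \<and> d \<inter> E k = {} \<longrightarrow> f x \<in> E k)"
        using Riff[of g "{f x} \<union> d"] g d fV[OF x] by auto
      have s1: "(\<forall>(bp, bc) \<in> Bp. R (g \<union> x ` bp) (x ` bc \<union> d)) \<longleftrightarrow>
          (\<forall>(bp, bc) \<in> Bp. \<forall>k<?n. g \<subseteq> D k \<and> d \<inter> E k = {} \<longrightarrow> x ` bp \<subseteq> D k \<longrightarrow> x ` bc \<inter> E k \<noteq> {})"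
      proof -
        have "R (g \<union> x ` bp) (x ` bc \<union> d) \<longleftrightarrow> (\<forall>k<?n. g \<subseteq> D k \<and> d \<inter> E k = {} \<longrightarrow> x ` bp \<subseteq> D k \<longrightarrow> x ` bc \<inter> E k \<noteq> {})"
          if "(bp, bc) \<in> Bp" for bp bc
        proof -
          have "g \<union> x ` bp \<subseteq> V" "x ` bc \<union> d \<subseteq> V" using g d img[OF x] that assms(8) by blast+
          then have "R (g \<union> x ` bp) (x ` bc \<union> d) \<longleftrightarrow> (\<forall>k<?n. g \<union> x ` bp \<subseteq> D k \<longrightarrow> (x ` bc \<union> d) \<inter> E k \<noteq> {})"
            by (rule Riff)
          then show ?thesis by (simp only: ptw)
        qed
        then show ?thesis by (rule ballcong2)
      qed
      have s2: "(\<forall>(bp, bc) \<in> Bc. R (g \<union> x ` bp) (x ` bc \<union> d)) \<longleftrightarrow>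
          (\<forall>(bp, bc) \<in> Bc. \<forall>k<?n. g \<subseteq> D k \<and> d \<inter> E k = {} \<longrightarrow> x ` bp \<subseteq> D k \<longrightarrow> x ` bc \<inter> E k \<noteq> {})"
      proof -
        have "R (g \<union> x ` bp) (x ` bc \<union> d) \<longleftrightarrow> (\<forall>k<?n. g \<subseteq> D k \<and> d \<inter> E k = {} \<longrightarrow> x ` bp \<subseteq> D k \<longrightarrow> x ` bc \<inter> E k \<noteq> {})"
          if "(bp, bc) \<in> Bc" for bp bc
        proof -
          have "g \<union> x ` bp \<subseteq> V" "x ` bc \<union> d \<subseteq> V" using g d img[OF x] that assms(9) by blast+
          then have "R (g \<union> x ` bp) (x ` bc \<union> d) \<longleftrightarrow> (\<forall>k<?n. g \<union> x ` bp \<subseteq> D k \<longrightarrow> (x ` bc \<union> d) \<inter> E k \<noteq> {})"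
            by (rule Riff)
          then show ?thesis by (simp only: ptw)
        qed
        then show ?thesis by (rule ballcong2)
      qed
      show "R (g \<union> {f x}) d \<longleftrightarrow> (\<forall>(bp, bc) \<in> Bp. R (g \<union> x ` bp) (x ` bc \<union> d))"
      proof -
        have e1: "(\<forall>k<?n. g \<subseteq> D k \<and> d \<inter> E k = {} \<longrightarrow> f x \<notin> D k) \<longleftrightarrow>
          (\<forall>k<?n. g \<subseteq> D k \<and> d \<inter> E k = {} \<longrightarrow> (\<forall>(bp, bc) \<in> Bp. x ` bp \<subseteq> D k \<longrightarrow> x ` bc \<inter> E k \<noteq> {}))"
          using P by (rule allcong_imp)
        have e2: "(\<forall>k<?n. g \<subseteq> D k \<and> d \<inter> E k = {} \<longrightarrow> (\<forall>(bp, bc) \<in> Bp. x ` bp \<subseteq> D k \<longrightarrow> x ` bc \<inter> E k \<noteq> {})) \<longleftrightarrow>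
          (\<forall>(bp, bc) \<in> Bp. \<forall>k<?n. g \<subseteq> D k \<and> d \<inter> E k = {} \<longrightarrow> x ` bp \<subseteq> D k \<longrightarrow> x ` bc \<inter> E k \<noteq> {})"
          by (rule swapq)
        show ?thesis unfolding r1 s1 e1 e2 ..
      qed
      show "R g ({f x} \<union> d) \<longleftrightarrow> (\<forall>(bp, bc) \<in> Bc. R (g \<union> x ` bp) (x ` bc \<union> d))"
      proof -
        have e1: "(\<forall>k<?n. g \<subseteq> D k \<and> d \<inter> E k = {} \<longrightarrow> f x \<in> E k) \<longleftrightarrow>
          (\<forall>k<?n. g \<subseteq> D k \<and> d \<inter> E k = {} \<longrightarrow> (\<forall>(bp, bc) \<in> Bc. x ` bp \<subseteq> D k \<longrightarrow> x ` bc \<inter> E k \<noteq> {}))"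
          using C by (rule allcong_imp)
        have e2: "(\<forall>k<?n. g \<subseteq> D k \<and> d \<inter> E k = {} \<longrightarrow> (\<forall>(bp, bc) \<in> Bc. x ` bp \<subseteq> D k \<longrightarrow> x ` bc \<inter> E k \<noteq> {})) \<longleftrightarrow>
          (\<forall>(bp, bc) \<in> Bc. \<forall>k<?n. g \<subseteq> D k \<and> d \<inter> E k = {} \<longrightarrow> x ` bp \<subseteq> D k \<longrightarrow> x ` bc \<inter> E k \<noteq> {})"
          by (rule swapq)
        show ?thesis unfolding r2 s2 e1 e2 ..
      qed
    qed
  qed
qed

end
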